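(* Let $S$ be an inverse monoid which is either (a) $E^*$-unitary and $0$-bisimple, or (b) $E$-unitary and bisimple, and let $C$ be the right unit submonoid of $S$. Then $S$ is $F^*$-inverse in case (a) (respectively $F$-inverse in case (b)) if and only if the partially ordered set $P_r(C)$ of principal right ideals of $C$ is a join semilattice.
   Context: For an inverse monoid $S$, $E(S)$ denotes its set of idempotents and, if $S$ has a zero, $E^*(S)$ its nonzero idempotents. A subset $U$ is unitary if for $u\in U$, $s\in S$: $su\in U\Rightarrow s\in U$ and $us\in U\Rightarrow s\in U$. $S$ is $E$-unitary if $E(S)$ is unitary, and $E^*$-unitary if $E^*(S)$ is unitary. $S$ is bisimple if all its elements are $\mathscr{D}$-related, and $0$-bisimple (for $S$ with zero) if all its nonzero elements are $\mathscr{D}$-related. The right unit submonoid of $S$ is $\{s\in S: st=1 \text{ for some } t\in S\}$. The natural partial order is $a\le b$ iff $a=eb$ for some idempotent $e$; $S$ is $F^*$-inverse if every nonzero element lies beneath a unique maximal element, and $F$-inverse (for $S$ without zero) if every element lies beneath a unique maximal element. $P_r(C)$ is the set $\{aC : a\in C\}$ ordered by inclusion; a join semilattice is a poset in which any two elements have a least upper bound. *)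

theory Defs
  imports Main
begin

text \<open>The inverse monoid S is the whole carrier of a type of class monoid_mult.\<close>

definition inverse_monoid :: "'a::monoid_mult itself \<Rightarrow> bool" where
  "inverse_monoid _ \<longleftrightarrow> (\<forall>a::'a. \<exists>!b. a * b * a = a \<and> b * a * b = b)"

definition idempotents :: "'a::monoid_mult set" ("E\<^sub>S") where
  "idempotents = {e. e * e = e}"

definition is_zero :: "'a::monoid_mult \<Rightarrow> bool" where
  "is_zero z \<longleftrightarrow> (\<forall>s. z * s = z \<and> s * z = z)"

definition unitary :: "'a::monoid_mult set \<Rightarrow> bool" where
  "unitary U \<longleftrightarrow> (\<forall>u\<in>U. \<forall>s. (s * u \<in> U \<longrightarrow> s \<in> U) \<and> (u * s \<in> U \<longrightarrow> s \<in> U))"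

definition E_unitary :: "'a::monoid_mult itself \<Rightarrow> bool" where
  "E_unitary _ \<longleftrightarrow> unitary (idempotents :: 'a set)"

definition Estar_unitary :: "'a::monoid_mult \<Rightarrow> bool" where
  "Estar_unitary z \<longleftrightarrow> unitary (idempotents - {z})"

definition green_R :: "'a::monoid_mult \<Rightarrow> 'a \<Rightarrow> bool" where
  "green_R a b \<longleftrightarrow> range (\<lambda>s. a * s) = range (\<lambda>s. b * s)"

definition green_L :: "'a::monoid_mult \<Rightarrow> 'a \<Rightarrow> bool" where
  "green_L a b \<longleftrightarrow> range (\<lambda>s. s * a) = range (\<lambda>s. s * b)"

definition green_D :: "'a::monoid_mult \<Rightarrow> 'a \<Rightarrow> bool" where
  "green_D a b \<longleftrightarrow> (\<exists>c. green_R a c \<and> green_L c b)"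

definition bisimple :: "'a::monoid_mult itself \<Rightarrow> bool" where
  "bisimple _ \<longleftrightarrow> (\<forall>a b :: 'a. green_D a b)"

definition zero_bisimple :: "'a::monoid_mult \<Rightarrow> bool" where
  "zero_bisimple z \<longleftrightarrow> (\<forall>a b. a \<noteq> z \<longrightarrow> b \<noteq> z \<longrightarrow> green_D a b)"

definition right_units :: "'a::monoid_mult set" where
  "right_units = {s. \<exists>t. s * t = 1}"

definition nat_le :: "'a::monoid_mult \<Rightarrow> 'a \<Rightarrow> bool" where
  "nat_le a b \<longleftrightarrow> (\<exists>e\<in>idempotents. a = e * b)"

definition nat_maximal :: "'a::monoid_mult \<Rightarrow> bool" where
  "nat_maximal m \<longleftrightarrow> (\<forall>x. nat_le m x \<longrightarrow> x = m)"

definition F_star_inverse :: "'a::monoid_mult \<Rightarrow> bool" where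
  "F_star_inverse z \<longleftrightarrow> (\<forall>a. a \<noteq> z \<longrightarrow> (\<exists>!m. nat_maximal m \<and> nat_le a m))"

definition F_inverse :: "'a::monoid_mult itself \<Rightarrow> bool" where
  "F_inverse _ \<longleftrightarrow> (\<forall>a::'a. \<exists>!m. nat_maximal m \<and> nat_le a m)"

definition principal_right_ideals :: "'a::monoid_mult set \<Rightarrow> 'a set set" where
  "principal_right_ideals C = {(\<lambda>c. a * c) ` C | a. a \<in> C}"

definition join_semilattice_sets :: "'b set set \<Rightarrow> bool" where
  "join_semilattice_sets P \<longleftrightarrow>
     (\<forall>X\<in>P. \<forall>Y\<in>P. \<exists>Z\<in>P. X \<subseteq> Z \<and> Y \<subseteq> Z \<and> (\<forall>W\<in>P. X \<subseteq> W \<and> Y \<subseteq> W \<longrightarrow> Z \<subseteq> W))"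

end

theory Submission imports Defs begin
locale invmon =
  fixes inv :: "'a::monoid_mult \<Rightarrow> 'a"
  assumes inv1: "a * inv a * a = a" and inv2: "inv a * a * inv a = inv a"
    and inv_uniq: "a * b * a = a \<Longrightarrow> b * a * b = b \<Longrightarrow> b = inv a"
begin

lemma inv_inv[simp]: "inv (inv a) = a"
  using inv_uniq[of "inv a" a] inv1 inv2 by (simp add: mult.assoc)

lemma idem_inv: fixes e :: 'a shows "e * e = e \<Longrightarrow> inv e = e"
  using inv_uniq[of e e] by simp

lemma idem_prod: fixes e f :: 'a assumes "e*e = e" "f*f = f" shows "(e*f)*(e*f) = e*f"
proof -
  define x where "x = inv (e*f)"
  have ee: "\<And>y. e*(e*y) = e*y" using assms(1) by (metis mult.assoc)
  have ff: "\<And>y. f*(f*y) = f*y" using assms(2) by (metis mult.assoc)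
  have x1: "e*f*x*(e*f) = e*f" and x2: "x*(e*f)*x = x" using inv1 inv2 x_def by auto
  have "e*f*(f*x*e)*(e*f) = e*(f*f)*x*(e*e)*f" by (simp add: mult.assoc)
  hence "e*f*(f*x*e)*(e*f) = e*f" using x1 assms by (simp add: mult.assoc)
  moreover have "(f*x*e)*(e*f)*(f*x*e) = f*x*e"
  proof -
    have "(f*x*e)*(e*f)*(f*x*e) = f*(x*(e*f)*x)*e" using assms by (simp add: mult.assoc ee ff)
    thus ?thesis using x2 by simp
  qed
  ultimately have fx: "f*x*e = x" using inv_uniq x_def by blast
  have "x*x = x"
  proof -
    have "x*x = f*(x*(e*f)*x)*e" using fx by (metis mult.assoc)
    thus ?thesis using x2 fx by simp
  qed
  hence "inv x = x" by (rule idem_inv)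
  hence "e*f = x" using x_def by (metis inv_inv)
  thus ?thesis using \<open>x*x = x\<close> by simp
qed

lemma idem_comm: fixes e f :: 'a assumes "e*e = e" "f*f = f" shows "e*f = f*e"
proof -
  have ef: "(e*f)*(e*f) = e*f" and fe: "(f*e)*(f*e) = f*e" using idem_prod assms by auto
  have "(e*f)*(f*e)*(e*f) = e*f" using assms ef by (metis mult.assoc)
  moreover have "(f*e)*(e*f)*(f*e) = f*e" using assms fe by (metis mult.assoc)
  ultimately have "f*e = inv (e*f)" by (rule inv_uniq)
  thus ?thesis using idem_inv[OF ef] by simp
qed

lemma idem_ia: "(inv a * a) * (inv a * a) = inv a * a"
  by (metis inv2 mult.assoc)
lemma idem_ai: "(a * inv a) * (a * inv a) = a * inv a"
  by (metis inv1 mult.assoc)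

lemma inv_mult: "inv (a*b) = inv b * inv a"
proof -
  have c: "(b * inv b) * (inv a * a) = (inv a * a) * (b * inv b)"
    using idem_comm idem_ia idem_ai by blast
  have "a*b*(inv b * inv a)*(a*b) = a*b"
  proof -
    have "a*b*(inv b * inv a)*(a*b) = a*((b * inv b) * (inv a * a))*b" by (simp add: mult.assoc)
    also have "\<dots> = a*((inv a * a) * (b * inv b))*b" using c by simp
    also have "\<dots> = (a*inv a*a) * (b*inv b*b)" by (simp add: mult.assoc)
    finally show ?thesis using inv1 by simp
  qed
  moreover have "(inv b * inv a)*(a*b)*(inv b * inv a) = inv b * inv a"
  proof -
    have "(inv b * inv a)*(a*b)*(inv b * inv a) = inv b*((inv a * a) * (b * inv b))*inv a" by (simp add: mult.assoc)
    also have "\<dots> = inv b*((b * inv b) * (inv a * a))*inv a" using c by simp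
    also have "\<dots> = (inv b*b*inv b) * (inv a*a*inv a)" by (simp add: mult.assoc)
    finally show ?thesis using inv2 by simp
  qed
  ultimately show ?thesis using inv_uniq by metis
qed


lemma idem_iff: fixes x :: 'a shows "x \<in> idempotents \<longleftrightarrow> x * x = x"
  by (simp add: idempotents_def)

lemma idem_mul: fixes e :: 'a shows "e*e = e \<Longrightarrow> e*(e*y) = e*y"
  by (metis mult.assoc)

lemma one_R: fixes x :: 'a shows "x*y = 1 \<Longrightarrow> x*(y*z) = z"
  by (metis mult.assoc mult_1_left)

lemma nat_le_eq: "nat_le a b \<Longrightarrow> a = a * inv a * b"
proof -
  assume "nat_le a b"
  then obtain e where e: "e*e = e" "a = e*b" by (auto simp: nat_le_def idempotents_def)
  have ie: "inv a = inv b * e" using e inv_mult idem_inv by simp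
  have c: "e * (b * inv b) = (b * inv b) * e" using idem_comm e idem_ai by blast
  have "a * inv a * b = e * (b * inv b) * e * b" using ie e by (simp add: mult.assoc)
  also have "e * (b * inv b) * e = e * e * (b * inv b)" using c by (metis mult.assoc)
  also have "e * e * (b * inv b) * b = e * (b * inv b * b)" using e by (simp add: mult.assoc)
  also have "\<dots> = a" using e inv1 by simp
  finally show ?thesis by simp
qed

lemma nat_le_refl: fixes a :: 'a shows "nat_le a a"
  unfolding nat_le_def idempotents_def by (rule bexI[of _ 1]) auto

lemma nat_le_trans: fixes a :: 'a shows "nat_le a b \<Longrightarrow> nat_le b c \<Longrightarrow> nat_le a c"
proof -
  assume "nat_le a b" "nat_le b c"
  then obtain e f where e: "e*e = e" "a = e*b" and f: "f*f = f" "b = f*c"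
    by (auto simp: nat_le_def idempotents_def)
  have "(e*f)*(e*f) = e*f" using idem_prod e f by blast
  moreover have "a = (e*f)*c" using e f by (simp add: mult.assoc)
  ultimately show ?thesis unfolding nat_le_def idempotents_def by blast
qed

lemma nat_le_antisym: fixes a :: 'a shows "nat_le a b \<Longrightarrow> nat_le b a \<Longrightarrow> a = b"
proof -
  assume "nat_le a b" "nat_le b a"
  then obtain e f where e: "e*e = e" "a = e*b" and f: "f*f = f" "b = f*a"
    by (auto simp: nat_le_def idempotents_def)
  have c: "e*f = f*e" using idem_comm e f by blast
  have "b = f*(e*b)" using e f by simp
  also have "\<dots> = e*(f*b)" using c by (metis mult.assoc)
  also have "\<dots> = e*b" using f by (metis mult.assoc)
  finally show ?thesis using e by simp
qed

lemma nat_le_dom: "nat_le x y \<Longrightarrow> x * inv x * (y * inv y) = x * inv x"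
proof -
  assume "nat_le x y"
  then obtain e where e: "e*e = e" "x = e*y" by (auto simp: nat_le_def idempotents_def)
  have ie: "inv x = inv y * e" using e inv_mult idem_inv by simp
  have c: "e * (y * inv y) = (y * inv y) * e" using idem_comm e idem_ai by blast
  have xx: "x * inv x = e * (y * inv y)"
  proof -
    have "x * inv x = e * (y * inv y) * e" using ie e by (simp add: mult.assoc)
    also have "\<dots> = e * e * (y * inv y)" using c by (metis mult.assoc)
    finally show ?thesis using e by simp
  qed
  have "x * inv x * (y * inv y) = e * ((y * inv y) * (y * inv y))" using xx by (simp add: mult.assoc)
  thus ?thesis using idem_ai xx by simp
qed

lemma C_iff: "s \<in> right_units \<longleftrightarrow> s * inv s = 1"
proof
  assume "s \<in> right_units"
  then obtain t where t: "s*t = 1" by (auto simp: right_units_def)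
  have "s * inv s = s * inv s * s * t" using t by (simp add: mult.assoc)
  thus "s * inv s = 1" using inv1 t by simp
qed (auto simp: right_units_def)

lemma C_mult: fixes a :: 'a shows "a \<in> right_units \<Longrightarrow> b \<in> right_units \<Longrightarrow> a*b \<in> right_units"
proof -
  assume "a \<in> right_units" "b \<in> right_units"
  hence "a * inv a = 1" "b * inv b = 1" using C_iff by auto
  hence "a*b*inv(a*b) = 1" using inv_mult by (simp add: mult.assoc one_R)
  thus ?thesis using C_iff by blast
qed

lemma C_one: "(1::'a) \<in> right_units" by (simp add: right_units_def)

lemma le_C: "a \<in> right_units \<Longrightarrow> b \<in> right_units \<Longrightarrow> nat_le (inv a * b) t \<longleftrightarrow> a * t = b"
proof
  assume a: "a \<in> right_units" and b: "b \<in> right_units" and le: "nat_le (inv a * b) t"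
  hence aa: "a * inv a = 1" using C_iff by auto
  have "inv a * b = (inv a * b) * inv (inv a * b) * t" using nat_le_eq le by blast
  also have "\<dots> = inv a * (b * inv b) * a * t" using inv_mult by (simp add: mult.assoc)
  finally have "inv a * b = inv a * (b * inv b) * a * t" .
  hence "a * inv a * b = (a * inv a) * (b * inv b) * a * t" by (simp add: mult.assoc)
  hence "b = b * inv b * (a * t)" using aa by (simp add: mult.assoc)
  moreover have "b * inv b = 1" using b C_iff by blast
  ultimately show "a * t = b" by simp
next
  assume a: "a \<in> right_units" and "b \<in> right_units" and "a * t = b"
  hence "inv a * b = (inv a * a) * t" by (simp add: mult.assoc)
  thus "nat_le (inv a * b) t" unfolding nat_le_def idempotents_def using idem_ia by blast
qed


lemma dom_C:
  assumes a: "a \<in> right_units" and c: "c \<in> right_units"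
    and d: "inv a * a * (inv c * c) = inv a * a"
  shows "a * inv c \<in> right_units" "a * inv c * c = a"
proof -
  have aa: "a * inv a = 1" using a C_iff by blast
  have "a = a * (inv a * a * (inv c * c))" using d inv1 by (simp add: mult.assoc)
  hence acc: "a * inv c * c = a" using inv1 by (metis mult.assoc)
  have "a * inv c * inv (a * inv c) = a * (inv c * c) * inv a" using inv_mult by (simp add: mult.assoc)
  also have "\<dots> = 1" using acc aa by (simp add: mult.assoc)
  finally show "a * inv c \<in> right_units" using C_iff by blast
  show "a * inv c * c = a" by (rule acc)
qed

lemma decomp:
  assumes "green_D s 1"
  shows "\<exists>p\<in>right_units. \<exists>q\<in>right_units. s = inv p * q"
proof -
  obtain c where R: "green_R s c" and L: "green_L c 1" using assms green_D_def by blast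
  from L have "1 \<in> range (\<lambda>x. x * c)" unfolding green_L_def by simp
  then obtain w where w: "1 = w * c" by auto
  have cc: "inv c * c = 1"
  proof -
    have "inv c * c = w * (c * inv c * c)" by (metis w mult.assoc mult_1_left)
    thus ?thesis using inv1 w by simp
  qed
  from R have "s \<in> range (\<lambda>x. c * x)" "c \<in> range (\<lambda>x. s * x)" unfolding green_R_def
    by (metis rangeI mult_1_right)+
  then obtain x y where x: "s = c * x" and y: "c = s * y" by auto
  have s1: "c * inv c * s = s" using x inv1 by (metis mult.assoc)
  have s2: "s * inv s * c = c" using y inv1 by (metis mult.assoc)
  have "inv c \<in> right_units" using cc C_iff by simp
  moreover have "inv c * s \<in> right_units"
  proof -
    have "inv c * s * inv (inv c * s) = inv c * (s * inv s * c)" using inv_mult by (simp add: mult.assoc)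
    thus ?thesis using s2 cc C_iff by simp
  qed
  moreover have "s = inv (inv c) * (inv c * s)" using s1 by (simp add: mult.assoc)
  ultimately show ?thesis by blast
qed

lemma cancel:
  fixes c :: 'a
  assumes U: "unitary (idempotents \<inter> N)" and Nf: "\<forall>x y. x*y \<in> N \<longrightarrow> x \<in> N \<and> y \<in> N"
    and e: "e*e = e" and c: "c \<in> right_units" and c': "c' \<in> right_units"
    and eq: "e*c = e*c'" and N: "e*c \<in> N"
  shows "c = c'"
proof -
  define w where "w = e*c"
  define h where "h = inv w * w"
  have cc: "c * inv c = 1" "c' * inv c' = 1" using c c' C_iff by auto
  have ie: "inv e = e" using e idem_inv by simp
  have hE: "h \<in> idempotents" unfolding h_def idem_iff by (rule idem_ia)
  have "w * h = w" unfolding h_def using inv1 by (simp add: mult.assoc)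
  hence hN: "h \<in> N" using Nf N w_def by metis
  have h': "h = inv c' * e * c'" unfolding h_def w_def using eq inv_mult ie by (simp add: mult.assoc idem_mul[OF e])
  have "inv c * c' * h = inv c * e * c'" using h' cc by (simp add: mult.assoc one_R[OF cc(2)])
  also have "\<dots> = h"
  proof -
    have "h = inv (e*c) * (e*c')" using eq h_def w_def by simp
    thus ?thesis using inv_mult ie by (simp add: mult.assoc idem_mul[OF e])
  qed
  finally have "inv c * c' * h \<in> idempotents \<inter> N" using hE hN by simp
  hence fE: "inv c * c' \<in> idempotents \<inter> N" using U hE hN unfolding unitary_def by blast
  define f where "f = inv c * c'"
  have ff: "f*f = f" using fE f_def idem_iff by blast
  have f2: "f = inv c' * c" using idem_inv[OF ff] inv_mult f_def by simp
  have c'f: "c' = c * f" unfolding f_def using cc by (simp add: mult.assoc[symmetric])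
  have cf: "c = c' * f" unfolding f2 using cc by (simp add: mult.assoc[symmetric])
  have "c = c * (f * f)" using cf c'f by (simp add: mult.assoc)
  thus ?thesis using ff c'f by simp
qed


lemma up_N: fixes s :: 'a assumes Nf: "\<forall>x y. x*y \<in> N \<longrightarrow> x \<in> N \<and> y \<in> N"
  and "nat_le s t" "s \<in> N" shows "t \<in> N"
  using assms unfolding nat_le_def by blast

lemma C_N: fixes a :: 'a assumes Nf: "\<forall>x y. x*y \<in> N \<longrightarrow> x \<in> N \<and> y \<in> N" and "1 \<in> N"
  and "a \<in> right_units" shows "a \<in> N"
  using assms C_iff by metis

lemma dom_inv: "a \<in> right_units \<Longrightarrow> b \<in> right_units \<Longrightarrow> (inv a * b) * inv (inv a * b) = inv a * a"
  using C_iff[of b] inv_mult by (simp add: mult.assoc one_R)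

lemma F_to_join:
  fixes N :: "'a set"
  assumes Nf: "\<forall>x y. x*y \<in> N \<longrightarrow> x \<in> N \<and> y \<in> N" and N1: "1 \<in> N"
    and D: "\<forall>s\<in>N. green_D s 1"
    and F: "\<forall>a\<in>N. \<exists>!m. nat_maximal m \<and> nat_le a m"
  shows "join_semilattice_sets (principal_right_ideals (right_units :: 'a set))"
  unfolding join_semilattice_sets_def
proof (intro ballI)
  fix X Y assume "X \<in> principal_right_ideals (right_units::'a set)" "Y \<in> principal_right_ideals (right_units::'a set)"
  then obtain a b where a: "a \<in> right_units" and b: "b \<in> right_units"
    and X: "X = (\<lambda>c. a*c) ` right_units" and Y: "Y = (\<lambda>c. b*c) ` right_units"
    unfolding principal_right_ideals_def by blast
  define s where "s = inv a * b"
  have aa: "a * inv a = 1" using a C_iff by blast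
  have "a * s = b" unfolding s_def using aa by (simp add: mult.assoc[symmetric])
  hence sN: "s \<in> N" using C_N[OF Nf N1 b] Nf by metis
  obtain m where m: "nat_maximal m" "nat_le s m" and muniq: "\<And>m'. nat_maximal m' \<and> nat_le s m' \<Longrightarrow> m' = m"
    using F sN by metis
  have mN: "m \<in> N" using up_N[OF Nf m(2) sN] .
  obtain c d where c: "c \<in> right_units" and d: "d \<in> right_units" and md: "m = inv c * d"
    using decomp D mN by blast
  have am: "a * m = b" using le_C[OF a b] m(2) s_def by blast
  have dd: "inv a * a * (inv c * c) = inv a * a"
    using nat_le_dom[OF m(2)] dom_inv[OF a b] dom_inv[OF c d] s_def md by simp
  define k where "k = a * inv c"
  have kC: "k \<in> right_units" and kc: "k * c = a" using dom_C[OF a c dd] k_def by auto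
  have kd: "k * d = b" using am md k_def by (simp add: mult.assoc)
  define Z where "Z = (\<lambda>x. k*x) ` right_units"
  show "\<exists>Z\<in>principal_right_ideals (right_units::'a set). X \<subseteq> Z \<and> Y \<subseteq> Z \<and>
          (\<forall>W\<in>principal_right_ideals (right_units::'a set). X \<subseteq> W \<and> Y \<subseteq> W \<longrightarrow> Z \<subseteq> W)"
  proof (intro bexI[of _ Z] conjI ballI impI)
    show "Z \<in> principal_right_ideals (right_units::'a set)" unfolding Z_def principal_right_ideals_def using kC by blast
    show "X \<subseteq> Z" unfolding X Z_def
    proof
      fix y assume "y \<in> (\<lambda>c. a*c) ` right_units"
      then obtain x where "x \<in> right_units" "y = a*x" by blast
      hence "y = k*(c*x)" "c*x \<in> right_units" using kc C_mult c by (auto simp: mult.assoc)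
      thus "y \<in> (\<lambda>x. k*x) ` right_units" by blast
    qed
    show "Y \<subseteq> Z" unfolding Y Z_def
    proof
      fix y assume "y \<in> (\<lambda>c. b*c) ` right_units"
      then obtain x where "x \<in> right_units" "y = b*x" by blast
      hence "y = k*(d*x)" "d*x \<in> right_units" using kd C_mult d by (auto simp: mult.assoc)
      thus "y \<in> (\<lambda>x. k*x) ` right_units" by blast
    qed
    fix W assume W: "W \<in> principal_right_ideals (right_units::'a set)" and XYW: "X \<subseteq> W \<and> Y \<subseteq> W"
    then obtain u where u: "u \<in> right_units" and Wu: "W = (\<lambda>c. u*c) ` right_units"
      unfolding principal_right_ideals_def by blast
    have "a \<in> W" using XYW X C_one by (metis image_eqI mult_1_right subsetD)
    then obtain p where p: "p \<in> right_units" "a = u*p" using Wu by blast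
    have "b \<in> W" using XYW Y C_one by (metis image_eqI mult_1_right subsetD)
    then obtain q where q: "q \<in> right_units" "b = u*q" using Wu by blast
    define t where "t = inv p * q"
    have pp: "p * inv p = 1" using p C_iff by blast
    have "a * t = b" unfolding t_def using p q pp by (simp add: mult.assoc one_R[OF pp])
    hence st: "nat_le s t" using le_C[OF a b] s_def by blast
    have tN: "t \<in> N" using up_N[OF Nf st sN] .
    obtain m2 where m2: "nat_maximal m2" "nat_le t m2" using F tN by metis
    have "m2 = m" using muniq m2 nat_le_trans[OF st m2(2)] by blast
    hence tm: "nat_le t m" using m2 by simp
    have pm: "p * m = q" using le_C[OF p(1) q(1)] tm t_def by blast
    have dd2: "inv p * p * (inv c * c) = inv p * p"
      using nat_le_dom[OF tm] dom_inv[OF p(1) q(1)] dom_inv[OF c d] t_def md by simp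
    define w where "w = p * inv c"
    have wC: "w \<in> right_units" using dom_C[OF p(1) c dd2] w_def by auto
    have kuw: "k = u * w" unfolding k_def w_def using p by (simp add: mult.assoc)
    show "Z \<subseteq> W" unfolding Z_def Wu
    proof
      fix y assume "y \<in> (\<lambda>x. k*x) ` right_units"
      then obtain x where "x \<in> right_units" "y = k*x" by blast
      hence "y = u*(w*x)" "w*x \<in> right_units" using kuw C_mult wC by (auto simp: mult.assoc)
      thus "y \<in> (\<lambda>x. u*x) ` right_units" by blast
    qed
  qed
qed


lemma join_to_F:
  fixes N :: "'a set"
  assumes Nf: "\<forall>x y. x*y \<in> N \<longrightarrow> x \<in> N \<and> y \<in> N" and N1: "1 \<in> N"
    and D: "\<forall>s\<in>N. green_D s 1"
    and U: "unitary (idempotents \<inter> N)"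
    and J: "join_semilattice_sets (principal_right_ideals (right_units :: 'a set))"
  shows "\<forall>s\<in>N. \<exists>!m. nat_maximal m \<and> nat_le s m"
proof
  fix s assume sN: "s \<in> N"
  obtain a b where a: "a \<in> right_units" and b: "b \<in> right_units" and sab: "s = inv a * b"
    using decomp D sN by blast
  define X where "X = (\<lambda>c. a*c) ` (right_units::'a set)"
  define Y where "Y = (\<lambda>c. b*c) ` (right_units::'a set)"
  have XP: "X \<in> principal_right_ideals right_units" and YP: "Y \<in> principal_right_ideals right_units"
    unfolding X_def Y_def principal_right_ideals_def using a b by blast+
  have H: "\<exists>Z\<in>principal_right_ideals (right_units::'a set). X \<subseteq> Z \<and> Y \<subseteq> Z \<and> (\<forall>W\<in>principal_right_ideals (right_units::'a set). X \<subseteq> W \<and> Y \<subseteq> W \<longrightarrow> Z \<subseteq> W)"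
  proof -
    have J0: "\<forall>X\<in>principal_right_ideals (right_units::'a set). \<forall>Y\<in>principal_right_ideals (right_units::'a set). \<exists>Z\<in>principal_right_ideals (right_units::'a set). X \<subseteq> Z \<and> Y \<subseteq> Z \<and> (\<forall>W\<in>principal_right_ideals (right_units::'a set). X \<subseteq> W \<and> Y \<subseteq> W \<longrightarrow> Z \<subseteq> W)"
      using J unfolding join_semilattice_sets_def .
    note J1 = bspec[OF J0 XP]
    show ?thesis using bspec[OF J1 YP] .
  qed
  then obtain Z where ZP: "Z \<in> principal_right_ideals (right_units::'a set)"
    and Zr: "X \<subseteq> Z \<and> Y \<subseteq> Z \<and> (\<forall>W\<in>principal_right_ideals (right_units::'a set). X \<subseteq> W \<and> Y \<subseteq> W \<longrightarrow> Z \<subseteq> W)"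
    by (rule bexE)
  have XZ: "X \<subseteq> Z" and YZ: "Y \<subseteq> Z" using Zr by simp_all
  have Zmin: "\<And>W. W \<in> principal_right_ideals (right_units::'a set) \<Longrightarrow> X \<subseteq> W \<Longrightarrow> Y \<subseteq> W \<Longrightarrow> Z \<subseteq> W"
    using Zr by simp
  obtain k where kC: "k \<in> right_units" and Zk: "Z = (\<lambda>c. k*c) ` right_units"
    using ZP unfolding principal_right_ideals_def by blast
  have "a \<in> Z" using XZ X_def C_one by (metis image_eqI mult_1_right subsetD)
  then obtain c where c: "c \<in> right_units" "a = k*c" using Zk by blast
  have "b \<in> Z" using YZ Y_def C_one by (metis image_eqI mult_1_right subsetD)
  then obtain d where d: "d \<in> right_units" "b = k*d" using Zk by blast
  define m where "m = inv c * d"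
  have cc: "c * inv c = 1" using c C_iff by blast
  have "a * m = b" unfolding m_def using c d by (simp add: mult.assoc one_R[OF cc])
  hence sm: "nat_le s m" using le_C[OF a b] sab by blast
  have aN: "a \<in> N" using C_N[OF Nf N1 a] .
  have all: "nat_le t m" if st: "nat_le s t" for t
  proof -
    have tN: "t \<in> N" using up_N[OF Nf st sN] .
    obtain p q where p: "p \<in> right_units" and q: "q \<in> right_units" and tpq: "t = inv p * q"
      using decomp D tN by blast
    have dd: "inv a * a * (inv p * p) = inv a * a"
      using nat_le_dom[OF st] dom_inv[OF a b] dom_inv[OF p q] sab tpq by simp
    define u where "u = a * inv p"
    have uC: "u \<in> right_units" and up: "u * p = a" using dom_C[OF a p dd] u_def by auto
    have at: "a * t = b" using le_C[OF a b] st sab by blast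
    have uq: "u * q = b" using at tpq u_def by (simp add: mult.assoc)
    define W where "W = (\<lambda>x. u*x) ` (right_units::'a set)"
    have WP: "W \<in> principal_right_ideals right_units"
      unfolding W_def principal_right_ideals_def using uC by blast
    have XW: "X \<subseteq> W" unfolding X_def W_def
    proof
      fix y assume "y \<in> (\<lambda>c. a*c) ` right_units"
      then obtain x where "x \<in> right_units" "y = a*x" by blast
      hence "y = u*(p*x)" "p*x \<in> right_units" using up C_mult p by (auto simp: mult.assoc)
      thus "y \<in> (\<lambda>x. u*x) ` right_units" by blast
    qed
    have YW: "Y \<subseteq> W" unfolding Y_def W_def
    proof
      fix y assume "y \<in> (\<lambda>c. b*c) ` right_units"
      then obtain x where "x \<in> right_units" "y = b*x" by blast
      hence "y = u*(q*x)" "q*x \<in> right_units" using uq C_mult q by (auto simp: mult.assoc)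
      thus "y \<in> (\<lambda>x. u*x) ` right_units" by blast
    qed
    have "k \<in> W" using Zmin[OF WP XW YW] Zk C_one by (metis image_eqI mult_1_right subsetD)
    then obtain w where w: "w \<in> right_units" "k = u*w" using W_def by blast
    define e where "e = inv u * u"
    have ee: "e*e = e" unfolding e_def by (rule idem_ia)
    have eN: "e*p \<in> N"
    proof -
      have "u*(e*p) = a" unfolding e_def using up inv1 by (simp add: mult.assoc[symmetric])
      thus ?thesis using Nf[rule_format, of u "e*p"] aN by simp
    qed
    have "u*p = u*(w*c)" using up c w by (simp add: mult.assoc)
    hence "e*p = e*(w*c)" unfolding e_def by (simp add: mult.assoc)
    hence pwc: "p = w*c" using cancel[OF U Nf ee p C_mult[OF w(1) c(1)]] eN by blast
    have eN2: "e*q \<in> N"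
    proof -
      have "u*(e*q) = b" unfolding e_def using uq inv1 by (simp add: mult.assoc[symmetric])
      thus ?thesis using Nf[rule_format, of u "e*q"] C_N[OF Nf N1 b] by simp
    qed
    have "u*q = u*(w*d)" using uq d w by (simp add: mult.assoc)
    hence "e*q = e*(w*d)" unfolding e_def by (simp add: mult.assoc)
    hence qwd: "q = w*d" using cancel[OF U Nf ee q C_mult[OF w(1) d(1)]] eN2 by blast
    have "p * m = q" unfolding m_def pwc qwd by (simp add: mult.assoc one_R[OF cc])
    thus "nat_le t m" using le_C[OF p q] tpq by blast
  qed
  have mmax: "nat_maximal m" unfolding nat_maximal_def
  proof (intro allI impI)
    fix x assume "nat_le m x"
    hence "nat_le x m" using all nat_le_trans[OF sm] by blast
    thus "x = m" using \<open>nat_le m x\<close> nat_le_antisym by blast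
  qed
  show "\<exists>!m. nat_maximal m \<and> nat_le s m"
  proof (rule ex1I[of _ m])
    show "nat_maximal m \<and> nat_le s m" using mmax sm by blast
    fix m2 assume "nat_maximal m2 \<and> nat_le s m2"
    thus "m2 = m" using all unfolding nat_maximal_def by blast
  qed
qed

end

lemma trivial_join:
  assumes all: "\<And>x y::'a::monoid_mult. x = y"
  shows "join_semilattice_sets (principal_right_ideals (right_units :: 'a set))"
proof -
  have "\<And>X. X \<in> principal_right_ideals (right_units :: 'a set) \<Longrightarrow> X = UNIV"
  proof -
    fix X assume "X \<in> principal_right_ideals (right_units :: 'a set)"
    then obtain a :: 'a where "X = (\<lambda>c. a*c) ` right_units" unfolding principal_right_ideals_def by blast
    moreover have "(1::'a) \<in> right_units" by (simp add: right_units_def)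
    ultimately have "a * 1 \<in> X" by blast
    thus "X = UNIV"
    proof -
      assume h: "a * 1 \<in> X"
      have "\<And>x. x \<in> X" using h all[of _ "a*1"] by metis
      thus "X = UNIV" by blast
    qed
  qed
  thus ?thesis unfolding join_semilattice_sets_def by blast
qed

theorem proposition4p3:
  fixes z :: "'a::monoid_mult"
  assumes "inverse_monoid TYPE('a)"
  shows "(is_zero z \<and> Estar_unitary z \<and> zero_bisimple z \<longrightarrow>
            (F_star_inverse z \<longleftrightarrow>
               join_semilattice_sets (principal_right_ideals (right_units :: 'a set))))
       \<and> (E_unitary TYPE('a) \<and> bisimple TYPE('a) \<longrightarrow>
            (F_inverse TYPE('a) \<longleftrightarrow>
               join_semilattice_sets (principal_right_ideals (right_units :: 'a set))))"
proof -
  define inv0 :: "'a \<Rightarrow> 'a" where "inv0 = (\<lambda>a. THE b. a * b * a = a \<and> b * a * b = b)"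
  have ex: "\<And>a::'a. \<exists>!b. a * b * a = a \<and> b * a * b = b"
    using assms unfolding inverse_monoid_def by blast
  have I: "\<And>a. a * inv0 a * a = a \<and> inv0 a * a * inv0 a = inv0 a"
    unfolding inv0_def by (rule theI'[OF ex])
  interpret invmon inv0
  proof
    fix a b :: 'a
    show "a * inv0 a * a = a" using I by blast
    show "inv0 a * a * inv0 a = inv0 a" using I by blast
    assume "a * b * a = a" "b * a * b = b"
    thus "b = inv0 a" using ex I by blast
  qed
  show ?thesis
  proof (intro conjI impI)
    assume A: "is_zero z \<and> Estar_unitary z \<and> zero_bisimple z"
    hence zz: "\<And>s. z * s = z \<and> s * z = z" unfolding is_zero_def by blast
    show "F_star_inverse z \<longleftrightarrow> join_semilattice_sets (principal_right_ideals (right_units :: 'a set))"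
    proof (cases "z = 1")
      case True
      have all: "\<And>x y::'a. x = y" by (metis True zz mult_1_right)
      show ?thesis using trivial_join[OF all] unfolding F_star_inverse_def using all by blast
    next
      case False
      define N where "N = {x::'a. x \<noteq> z}"
      have Nf: "\<forall>x y. x*y \<in> N \<longrightarrow> x \<in> N \<and> y \<in> N" unfolding N_def using zz by auto
      have N1: "1 \<in> N" using False N_def by auto
      have D: "\<forall>s\<in>N. green_D s 1" using A N1 unfolding zero_bisimple_def N_def by auto
      have U: "unitary (idempotents \<inter> N)" using A unfolding Estar_unitary_def N_def
        by (metis Diff_eq Compl_eq Collect_neg_eq insert_def singleton_conv)
      have FN: "F_star_inverse z \<longleftrightarrow> (\<forall>s\<in>N. \<exists>!m. nat_maximal m \<and> nat_le s m)"
        unfolding F_star_inverse_def N_def by auto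
      show ?thesis using FN F_to_join[OF Nf N1 D] join_to_F[OF Nf N1 D U] by blast
    qed
  next
    assume A: "E_unitary TYPE('a) \<and> bisimple TYPE('a)"
    define N where "N = (UNIV::'a set)"
    have Nf: "\<forall>x y. x*y \<in> N \<longrightarrow> x \<in> N \<and> y \<in> N" unfolding N_def by auto
    have N1: "1 \<in> N" using N_def by auto
    have D: "\<forall>s\<in>N. green_D s 1" using A unfolding bisimple_def by auto
    have U: "unitary (idempotents \<inter> N)" using A unfolding E_unitary_def N_def by simp
    have FN: "F_inverse TYPE('a) \<longleftrightarrow> (\<forall>s\<in>N. \<exists>!m. nat_maximal m \<and> nat_le s m)"
      unfolding F_inverse_def N_def by auto
    show "F_inverse TYPE('a) \<longleftrightarrow> join_semilattice_sets (principal_right_ideals (right_units :: 'a set))"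
      using FN F_to_join[OF Nf N1 D] join_to_F[OF Nf N1 D U] by blast
  qed
qed

end
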